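(* Let $(\alpha_n)_{n\ge0}$ be complex numbers with $|\alpha_n|<1$ and let $\mu_{n,r,s}$ be as in the context. For all nonnegative integers $n,r,s$, \[ \mu_{n,r,s}=\sum_{p\in\mathrm{gMot}((-r,r)\to(2n-s,s))}\mathrm{wt}_M(p). \]
   Context: For a polynomial $f(z)=\sum_{k=0}^n a_kz^k$ of degree $n$, write $\overline{f}(z)=\sum_k\overline{a_k}z^k$ and $f^*(z)=z^n\overline{f}(1/z)$. Define monic $\Phi_n$ by $\Phi_0=1$, $\Phi_{n+1}(z)=z\Phi_n(z)-\overline{\alpha_n}\Phi_n^*(z)$. Let $\mathcal{L}$ be the unique linear functional on Laurent polynomials with $\mathcal{L}(1)=1$ and $\mathcal{L}(\Phi_m(z)\overline{\Phi_n}(1/z))=0$ for $m\neq n$; set $\langle f,g\rangle=\mathcal{L}(f(z)\overline{g}(1/z))$ and $\mu_{n,r,s}=\langle\Phi_s(z),z^n\Phi_r(z)\rangle/\langle\Phi_s,\Phi_s\rangle$. Set $\alpha_{-1}=-1$. A gentle Motzkin path is a lattice path in $\mathbb{Z}\times\mathbb{Z}_{\ge0}$ with steps $(1,1)$, $(1,0)$, $(1,-1)$ such that an up-step $(a,b)\to(a+1,b+1)$ occurs only when $a+b$ is even and a down-step $(a,b)\to(a+1,b-1)$ occurs only when $a+b$ is odd. $\mathrm{gMot}((a,b)\to(c,d))$ denotes the set of gentle Motzkin paths from $(a,b)$ to $(c,d)$. The weight $\mathrm{wt}_M(p)$ is the product of step weights: up-step weight $1$; down-step $(a,b)\to(a+1,b-1)$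 weight $1-|\alpha_{b-1}|^2$; horizontal step $(a,b)\to(a+1,b)$ weight $\alpha_b$ if $a+b$ is even and $-\overline{\alpha_{b-1}}$ if $a+b$ is odd. *)

theory Defs
  imports Complex_Main "HOL-Computational_Algebra.Polynomial"
begin

text \<open>Conjugate-reversed polynomial f^*(z) = z^n conj-f(1/z), n = degree f.\<close>
definition polystar :: "complex poly \<Rightarrow> complex poly" where
  "polystar f = (\<Sum>k\<le>degree f. monom (cnj (coeff f (degree f - k))) k)"

fun Phi :: "(nat \<Rightarrow> complex) \<Rightarrow> nat \<Rightarrow> complex poly" where
  "Phi \<alpha> 0 = 1"
| "Phi \<alpha> (Suc n) = [:0, 1:] * Phi \<alpha> n - smult (cnj (\<alpha> n)) (polystar (Phi \<alpha> n))"

text \<open>Laurent polynomials are represented by finitely supported coefficient functions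
  int => complex.  Coefficients of the Laurent polynomial f(z) conj-g(1/z).\<close>
definition lprod :: "complex poly \<Rightarrow> complex poly \<Rightarrow> int \<Rightarrow> complex" where
  "lprod f g k = (\<Sum>i\<le>degree f. \<Sum>j\<le>degree g.
      if int i - int j = k then coeff f i * cnj (coeff g j) else 0)"

text \<open>A linear functional on Laurent polynomials is determined by its moments
  c k = L(z^k); this is the functional with moment sequence c.\<close>
definition Lfun :: "(int \<Rightarrow> complex) \<Rightarrow> (int \<Rightarrow> complex) \<Rightarrow> complex" where
  "Lfun c h = (\<Sum>k | h k \<noteq> 0. h k * c k)"

definition ip :: "(int \<Rightarrow> complex) \<Rightarrow> complex poly \<Rightarrow> complex poly \<Rightarrow> complex" where
  "ip c f g = Lfun c (lprod f g)"

definition mu :: "(int \<Rightarrow> complex) \<Rightarrow> (nat \<Rightarrow> complex) \<Rightarrow> nat \<Rightarrow> nat \<Rightarrow> nat \<Rightarrow> complex" where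
  "mu c \<alpha> n r s = ip c (Phi \<alpha> s) (monom 1 n * Phi \<alpha> r) / ip c (Phi \<alpha> s) (Phi \<alpha> s)"

definition alphaext :: "(nat \<Rightarrow> complex) \<Rightarrow> int \<Rightarrow> complex" where
  "alphaext \<alpha> k = (if k = -1 then -1 else \<alpha> (nat k))"

text \<open>Paths are lists of steps in {1,0,-1} (the change in height), starting at (a,b).\<close>
fun gentle :: "int \<Rightarrow> int \<Rightarrow> int list \<Rightarrow> bool" where
  "gentle a b [] = True"
| "gentle a b (st # ps) =
     (((st = 1 \<and> even (a + b)) \<or> (st = -1 \<and> odd (a + b) \<and> b \<ge> 1) \<or> st = 0)
      \<and> gentle (a + 1) (b + st) ps)"

definition gMot :: "int \<Rightarrow> int \<Rightarrow> int \<Rightarrow> int \<Rightarrow> int list set" where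
  "gMot a b c d = {ps. set ps \<subseteq> {-1, 0, 1} \<and> b \<ge> 0 \<and> gentle a b ps
      \<and> int (length ps) = c - a \<and> b + sum_list ps = d}"

fun wtM :: "(nat \<Rightarrow> complex) \<Rightarrow> int \<Rightarrow> int \<Rightarrow> int list \<Rightarrow> complex" where
  "wtM \<alpha> a b [] = 1"
| "wtM \<alpha> a b (st # ps) =
     (if st = 1 then 1
      else if st = -1 then 1 - complex_of_real ((cmod (alphaext \<alpha> (b - 1)))\<^sup>2)
      else if even (a + b) then alphaext \<alpha> b
      else - cnj (alphaext \<alpha> (b - 1))) * wtM \<alpha> (a + 1) (b + st) ps"

end

theory Submission
  imports Defs
begin


fun PS :: "(nat \<Rightarrow> complex) \<Rightarrow> int \<Rightarrow> int \<Rightarrow> nat \<Rightarrow> int \<Rightarrow> complex" where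
  "PS \<alpha> a b 0 d = (if b = d then 1 else 0)"
| "PS \<alpha> a b (Suc L) d = (if even (a+b) then PS \<alpha> (a+1) (b+1) L d + alphaext \<alpha> b * PS \<alpha> (a+1) b L d
    else (if b \<ge> 1 then (1 - complex_of_real ((cmod (alphaext \<alpha> (b-1)))\<^sup>2)) * PS \<alpha> (a+1) (b-1) L d else 0)
       + (- cnj (alphaext \<alpha> (b-1))) * PS \<alpha> (a+1) b L d)"

lemma gMot_finite: "finite (gMot a b c d)"
proof -
  have "gMot a b c d \<subseteq> {ps. set ps \<subseteq> {-1,0,1} \<and> length ps = nat (c - a)}"
    unfolding gMot_def by auto
  then show ?thesis using finite_lists_length_eq[of "{-1,0,1::int}"] finite_subset by blast
qed

lemma gMot_0: "gMot a b a d = (if b = d \<and> b \<ge> 0 then {[]} else {})"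
  unfolding gMot_def by auto

lemma gMot_Suc:
  assumes "b \<ge> 0" "c - a = int (Suc L)"
  shows "gMot a b c d =
    (if even (a+b) then Cons 1 ` gMot (a+1) (b+1) c d else {})
    \<union> Cons 0 ` gMot (a+1) b c d
    \<union> (if odd (a+b) \<and> b \<ge> 1 then Cons (-1) ` gMot (a+1) (b-1) c d else {})"
proof (rule set_eqI)
  fix ps
  show "ps \<in> gMot a b c d \<longleftrightarrow> ps \<in> (if even (a+b) then Cons 1 ` gMot (a+1) (b+1) c d else {})
    \<union> Cons 0 ` gMot (a+1) b c d
    \<union> (if odd (a+b) \<and> b \<ge> 1 then Cons (-1) ` gMot (a+1) (b-1) c d else {})"
  proof (cases ps)
    case Nil
    then show ?thesis using assms unfolding gMot_def by auto
  next
    case (Cons st qs)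
    then show ?thesis using assms unfolding gMot_def by (auto simp: algebra_simps)
  qed
qed

lemma sum_Cons_union:
  assumes "x \<noteq> y" "finite A" "finite B"
  shows "sum f (Cons x ` A \<union> Cons y ` B) = sum f (Cons x ` A) + sum f (Cons y ` B)"
  by (rule sum.union_disjoint) (use assms in auto)

lemma PS_gMot:
  "b \<ge> 0 \<Longrightarrow> (\<Sum>p\<in>gMot a b (a + int L) d. wtM \<alpha> a b p) = PS \<alpha> a b L d"
proof (induction L arbitrary: a b)
  case 0
  then show ?case by (simp add: gMot_0)
next
  case (Suc L)
  have e: "gMot a b (a + int (Suc L)) d =
    (if even (a+b) then Cons 1 ` gMot (a+1) (b+1) (a + int (Suc L)) d else {})
    \<union> Cons 0 ` gMot (a+1) b (a + int (Suc L)) d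
    \<union> (if odd (a+b) \<and> b \<ge> 1 then Cons (-1) ` gMot (a+1) (b-1) (a + int (Suc L)) d else {})"
    by (rule gMot_Suc) (use Suc in auto)
  have c: "a + int (Suc L) = (a+1) + int L" by simp
  have s: "\<And>st b' C. sum (wtM \<alpha> a b) (Cons st ` gMot (a+1) b' C d)
      = (\<Sum>p\<in>gMot (a+1) b' C d. wtM \<alpha> a b (st # p))"
    by (subst sum.reindex) (auto simp: inj_on_def)
  show ?case
  proof (cases "even (a+b)")
    case True
    have "(\<Sum>p\<in>gMot a b (a + int (Suc L)) d. wtM \<alpha> a b p)
       = sum (wtM \<alpha> a b) (Cons 1 ` gMot (a+1) (b+1) (a + int (Suc L)) d)
         + sum (wtM \<alpha> a b) (Cons 0 ` gMot (a+1) b (a + int (Suc L)) d)"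
      unfolding e using True by (simp add: sum_Cons_union gMot_finite)
    also have "\<dots> = PS \<alpha> a b (Suc L) d"
      using True Suc.IH[where a="a+1" and b="b+1"] Suc.IH[where a="a+1" and b=b] Suc.prems
      by (simp only: s c) (simp add: sum_distrib_left[symmetric])
    finally show ?thesis .
  next
    case False
    have "(\<Sum>p\<in>gMot a b (a + int (Suc L)) d. wtM \<alpha> a b p)
       = sum (wtM \<alpha> a b) (Cons 0 ` gMot (a+1) b (a + int (Suc L)) d)
         + (if b \<ge> 1 then sum (wtM \<alpha> a b) (Cons (-1) ` gMot (a+1) (b-1) (a + int (Suc L)) d) else 0)"
      unfolding e using False by (simp add: sum_Cons_union gMot_finite Un_commute)
    also have "\<dots> = PS \<alpha> a b (Suc L) d"
      using False Suc.IH[where a="a+1" and b="b-1"] Suc.IH[where a="a+1" and b=b] Suc.prems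
      by (simp only: s c) (simp add: sum_distrib_left[symmetric] sum_negf)
    finally show ?thesis .
  qed
qed

lemma PSz1: "int L + d < b \<Longrightarrow> PS \<alpha> a b L d = 0"
  by (induction L arbitrary: a b) auto

lemma PSz2: "even (a+b) \<Longrightarrow> 0 < L \<Longrightarrow> int L + d \<le> b \<Longrightarrow> PS \<alpha> a b L d = 0"
  by (cases L) (auto simp: PSz1)

definition Q :: "(nat \<Rightarrow> complex) \<Rightarrow> int \<Rightarrow> nat \<Rightarrow> nat \<Rightarrow> nat \<Rightarrow> complex" where
  "Q \<alpha> a b R t = (if t \<le> b + R then PS \<alpha> a (int b) (b + R - t) (int t) else 0)"

lemma Q_even0: "even (a + int b) \<Longrightarrow> Q \<alpha> a b 0 t = (if t = b then 1 else 0)"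
  unfolding Q_def by (auto simp: PSz2)

lemma Q_even:
  assumes "even (a + int b)" "2 \<le> R"
  shows "Q \<alpha> a b R t = Q \<alpha> (a+1) (b+1) (R-2) t + \<alpha> b * Q \<alpha> (a+1) b (R-1) t"
proof -
  consider "t < b + R" | "t = b + R" | "t > b + R" by linarith
  then show ?thesis
  proof cases
    case 1
    then obtain L where L: "b + R - t = Suc L" by (metis Suc_diff_Suc)
    have "Q \<alpha> a b R t = PS \<alpha> a (int b) (Suc L) (int t)" using 1 L by (simp add: Q_def)
    also have "\<dots> = PS \<alpha> (a+1) (int b + 1) L (int t) + \<alpha> b * PS \<alpha> (a+1) (int b) L (int t)"
      using assms by (simp add: alphaext_def)
    also have "\<dots> = Q \<alpha> (a+1) (b+1) (R-2) t + \<alpha> b * Q \<alpha> (a+1) b (R-1) t"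
    proof -
      have h1: "b + 1 + (R - 2) - t = L" "b + (R - 1) - t = L" "b + R - Suc t = L" "t \<le> b + 1 + (R - 2)" "t \<le> b + (R - 1)"
        using 1 L assms by arith+
      have "Q \<alpha> (a+1) (b+1) (R-2) t = PS \<alpha> (a+1) (int b + 1) L (int t)"
        unfolding Q_def using h1 by (simp add: add.commute)
      moreover have "Q \<alpha> (a+1) b (R-1) t = PS \<alpha> (a+1) (int b) L (int t)"
        unfolding Q_def using h1 by simp
      ultimately show ?thesis by simp
    qed
    finally show ?thesis .
  next
    case 2
    then show ?thesis using assms by (simp add: Q_def)
  next
    case 3
    then show ?thesis using assms by (simp add: Q_def)
  qed
qed

lemma Q_odd:
  assumes "odd (a + int b)" "1 \<le> R"
  shows "Q \<alpha> a b R t = (if b \<ge> 1 then (1 - complex_of_real ((cmod (\<alpha> (b-1)))\<^sup>2)) * Q \<alpha> (a+1) (b-1) R t else 0)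
     + (if b = 0 then 1 else - cnj (\<alpha> (b-1))) * Q \<alpha> (a+1) b (R-1) t"
proof -
  consider "t < b + R" | "t = b + R" | "t > b + R" by linarith
  then show ?thesis
  proof cases
    case 1
    then obtain L where L: "b + R - t = Suc L" by (metis Suc_diff_Suc)
    have "Q \<alpha> a b R t = PS \<alpha> a (int b) (Suc L) (int t)" using 1 L by (simp add: Q_def)
    also have "\<dots> = (if b \<ge> 1 then (1 - complex_of_real ((cmod (\<alpha> (b-1)))\<^sup>2)) * PS \<alpha> (a+1) (int (b-1)) L (int t) else 0)
     + (if b = 0 then 1 else - cnj (\<alpha> (b-1))) * PS \<alpha> (a+1) (int b) L (int t)"
      using assms by (auto simp: alphaext_def of_nat_diff nat_diff_distrib)
    also have "\<dots> = (if b \<ge> 1 then (1 - complex_of_real ((cmod (\<alpha> (b-1)))\<^sup>2)) * Q \<alpha> (a+1) (b-1) R t else 0)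
     + (if b = 0 then 1 else - cnj (\<alpha> (b-1))) * Q \<alpha> (a+1) b (R-1) t"
    proof -
      have h1: "b + (R - 1) - t = L" "t \<le> b + (R - 1)"
        using 1 L assms by arith+
      have h2: "b \<ge> 1 \<Longrightarrow> t \<le> b - 1 + R" "b \<ge> 1 \<Longrightarrow> int (b - 1) = int b - 1"
          "b \<ge> 1 \<Longrightarrow> b - 1 + R - t = L"
        using 1 L by arith+
      show ?thesis unfolding Q_def using h1 h2 by auto
    qed
    finally show ?thesis .
  next
    case 2
    then show ?thesis using assms by (simp add: Q_def)
  next
    case 3
    then show ?thesis using assms by (simp add: Q_def)
  qed
qed




lemma coeff_polystar: "coeff (polystar f) k = (if k \<le> degree f then cnj (coeff f (degree f - k)) else 0)"
  unfolding polystar_def by (simp add: coeff_sum coeff_monom)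

lemma degree_polystar: "degree (polystar f) \<le> degree f"
  by (rule degree_le) (simp add: coeff_polystar)

lemma coeff_xmult: "coeff ([:0,1:] * (p::complex poly)) k = (if k = 0 then 0 else coeff p (k - 1))"
  by (simp add: coeff_pCons split: nat.split)

lemma Phi_coeff: "(\<forall>k>n. coeff (Phi \<alpha> n) k = 0) \<and> coeff (Phi \<alpha> n) n = 1"
proof (induction n)
  case 0
  then show ?case by simp
next
  case (Suc n)
  then have d: "degree (Phi \<alpha> n) = n"
    by (metis degree_le le_antisym le_degree zero_neq_one)
  show ?case using Suc d
    by (auto simp: coeff_xmult coeff_polystar coeff_pCons split: nat.split)
qed

lemma degree_Phi [simp]: "degree (Phi \<alpha> n) = n"
  using Phi_coeff[of n \<alpha>] by (metis degree_le le_antisym le_degree zero_neq_one)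

lemma lead_Phi [simp]: "coeff (Phi \<alpha> n) n = 1"
  using Phi_coeff[of n \<alpha>] by simp

lemma coeff_Phi_Suc: "coeff (Phi \<alpha> (Suc n)) j = (if j = 0 then 0 else coeff (Phi \<alpha> n) (j-1))
   - cnj (\<alpha> n) * coeff (polystar (Phi \<alpha> n)) j"
  by (simp add: coeff_xmult del: mult_pCons_left)

lemma coeff_polystar_Phi: "coeff (polystar (Phi \<alpha> m)) k = (if k \<le> m then cnj (coeff (Phi \<alpha> m) (m - k)) else 0)"
  by (simp add: coeff_polystar del: Phi.simps)

lemma polystar_Phi_Suc:
  "polystar (Phi \<alpha> (Suc n)) = polystar (Phi \<alpha> n) - smult (\<alpha> n) ([:0,1:] * Phi \<alpha> n)"
proof (rule poly_eqI)
  fix k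
  show "coeff (polystar (Phi \<alpha> (Suc n))) k = coeff (polystar (Phi \<alpha> n) - smult (\<alpha> n) ([:0,1:] * Phi \<alpha> n)) k"
  proof -
    consider "k = 0" | "0 < k \<and> k \<le> n" | "k = Suc n" | "k > Suc n" by linarith
    then show ?thesis
    proof cases
      case 1 then show ?thesis by (simp only: coeff_polystar_Phi coeff_diff coeff_smult coeff_xmult coeff_Phi_Suc) (auto simp: coeff_polystar_Phi Suc_diff_le)
    next
      case 2 then show ?thesis by (simp only: coeff_polystar_Phi coeff_diff coeff_smult coeff_xmult coeff_Phi_Suc) (auto simp: coeff_polystar_Phi Suc_diff_le)
    next
      case 3 then show ?thesis by (simp only: coeff_polystar_Phi coeff_diff coeff_smult coeff_xmult coeff_Phi_Suc) (auto simp: coeff_polystar_Phi Suc_diff_le)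
    next
      case 4 then show ?thesis by (simp only: coeff_polystar_Phi coeff_diff coeff_smult coeff_xmult coeff_Phi_Suc) (auto simp: coeff_polystar_Phi Suc_diff_le coeff_eq_0)
    qed
  qed
qed

lemma polystar_Phi_0: "polystar (Phi \<alpha> 0) = Phi \<alpha> 0"
  by (simp add: polystar_def)

lemma cnj_mult_self: "cnj z * z = complex_of_real ((cmod z)\<^sup>2)"
  by (metis complex_norm_square mult.commute)

lemma polystar_Phi_rec:
  "polystar (Phi \<alpha> (Suc n)) = smult (1 - complex_of_real ((cmod (\<alpha> n))\<^sup>2)) (polystar (Phi \<alpha> n))
     - smult (\<alpha> n) (Phi \<alpha> (Suc n))"
proof -
  have "polystar (Phi \<alpha> (Suc n)) = polystar (Phi \<alpha> n) - smult (\<alpha> n) ([:0,1:] * Phi \<alpha> n)"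
    by (rule polystar_Phi_Suc)
  also have "\<dots> = smult (1 - \<alpha> n * cnj (\<alpha> n)) (polystar (Phi \<alpha> n))
     - smult (\<alpha> n) ([:0,1:] * Phi \<alpha> n - smult (cnj (\<alpha> n)) (polystar (Phi \<alpha> n)))"
    by (rule poly_eqI) (simp add: algebra_simps coeff_pCons split: nat.split)
  finally show ?thesis by (simp add: complex_norm_square[symmetric] mult.commute)
qed




lemma smult_sum_right: "smult c (sum f A) = (\<Sum>x\<in>A. smult c (f x))"
  by (induction A rule: infinite_finite_induct) (auto simp: smult_add_right)

definition SS :: "(nat \<Rightarrow> complex) \<Rightarrow> nat \<Rightarrow> int \<Rightarrow> nat \<Rightarrow> nat \<Rightarrow> complex poly" where
  "SS \<alpha> K a b R = (\<Sum>t\<le>K. smult (cnj (Q \<alpha> a b R t)) (Phi \<alpha> t))"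

lemma SS_even0: "even (a + int b) \<Longrightarrow> b \<le> K \<Longrightarrow> SS \<alpha> K a b 0 = Phi \<alpha> b"
proof -
  assume h: "even (a + int b)" "b \<le> K"
  have "SS \<alpha> K a b 0 = (\<Sum>t\<le>K. if b = t then Phi \<alpha> t else 0)"
    unfolding SS_def using h by (intro sum.cong) (auto simp: Q_even0)
  also have "\<dots> = Phi \<alpha> b" using h by (subst sum.delta') auto
  finally show ?thesis .
qed

lemma SS_even: assumes h: "even (a + int b)" "2 \<le> R" shows
   "SS \<alpha> K a b R = SS \<alpha> K (a+1) (b+1) (R-2) + smult (cnj (\<alpha> b)) (SS \<alpha> K (a+1) b (R-1))"
  unfolding SS_def Q_even[OF h, of \<alpha>] by (simp add: smult_sum_right smult_add_left sum.distrib)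

lemma SS_odd: assumes h: "odd (a + int b)" "1 \<le> R" shows "
   SS \<alpha> K a b R = (if b \<ge> 1 then smult (1 - complex_of_real ((cmod (\<alpha> (b-1)))\<^sup>2)) (SS \<alpha> K (a+1) (b-1) R) else 0)
     + smult (if b = 0 then 1 else - \<alpha> (b-1)) (SS \<alpha> K (a+1) b (R-1))"
proof -
  note e = Q_odd[OF h, of \<alpha>]
  show ?thesis
  unfolding SS_def e
  by (cases "b = 0") (simp_all add: smult_sum_right smult_add_left smult_diff_left sum.distrib sum_negf sum_subtractf)
qed

lemma expand:
  "b + R \<le> K \<Longrightarrow>
    (even (a + int b) \<and> even R \<longrightarrow> [:0,1:]^(R div 2) * Phi \<alpha> b = SS \<alpha> K a b R) \<and>
    (odd (a + int b) \<and> odd R \<longrightarrow> [:0,1:]^(R div 2) * polystar (Phi \<alpha> b) = SS \<alpha> K a b R)"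
proof (induction R arbitrary: a b rule: less_induct)
  case (less R)
  show ?case
  proof (intro conjI impI)
    assume ev: "even (a + int b) \<and> even R"
    show "[:0,1:]^(R div 2) * Phi \<alpha> b = SS \<alpha> K a b R"
    proof (cases "R = 0")
      case True
      then show ?thesis using ev less.prems by (simp add: SS_even0)
    next
      case False
      then have R2: "2 \<le> R" using ev by presburger
      obtain k where k: "R = Suc (Suc (2*k))" using ev R2
        by (metis False dvd_def even_Suc le_zero_eq mult_0_right not0_implies_Suc)
      have p1: "even ((a+1) + int (b+1))" using ev by presburger
      have p2: "odd ((a+1) + int b)" using ev by presburger
      have b1: "(b+1) + (R-2) \<le> K" "b + (R-1) \<le> K" using less.prems R2 by arith+
      have lt: "R - 2 < R" "R - 1 < R" using R2 by arith+
      have i1: "[:0,1:]^((R-2) div 2) * Phi \<alpha> (b+1) = SS \<alpha> K (a+1) (b+1) (R-2)"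
        using less.IH[OF lt(1) b1(1)] p1 k by simp
      have i2: "[:0,1:]^((R-1) div 2) * polystar (Phi \<alpha> b) = SS \<alpha> K (a+1) b (R-1)"
        using less.IH[OF lt(2) b1(2)] p2 k by simp
      have d: "(R-2) div 2 = k" "(R-1) div 2 = k" "R div 2 = Suc k" using k by simp_all
      have "SS \<alpha> K a b R = SS \<alpha> K (a+1) (b+1) (R-2) + smult (cnj (\<alpha> b)) (SS \<alpha> K (a+1) b (R-1))"
        using SS_even[OF _ R2] ev by blast
      also have "\<dots> = [:0,1:]^k * Phi \<alpha> (b+1) + smult (cnj (\<alpha> b)) ([:0,1:]^k * polystar (Phi \<alpha> b))"
        unfolding i1[symmetric] i2[symmetric] d ..
      also have "\<dots> = [:0,1:]^(R div 2) * Phi \<alpha> b"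
        unfolding d by (simp add: algebra_simps)
      finally show ?thesis by simp
    qed
  next
    assume od: "odd (a + int b) \<and> odd R"
    then have R1: "1 \<le> R" by presburger
    have lt: "R - 1 < R" using R1 by arith
    have e: "(R-1) div 2 = R div 2" using od by presburger
    show "[:0,1:]^(R div 2) * polystar (Phi \<alpha> b) = SS \<alpha> K a b R"
      using less.prems od
    proof (induction b arbitrary: a)
      case 0
      have b1: "0 + (R-1) \<le> K" using 0 by arith
      have p: "even ((a+1) + int 0)" using 0 by presburger
      have i: "[:0,1:]^(R div 2) * Phi \<alpha> 0 = SS \<alpha> K (a+1) 0 (R-1)"
        using less.IH[OF lt b1] p e od by simp
      have "SS \<alpha> K a 0 R = SS \<alpha> K (a+1) 0 (R-1)"
        using SS_odd[of a 0 R \<alpha> K] 0 R1 by simp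
      then show ?case using i polystar_Phi_0[of \<alpha>] by simp
    next
      case (Suc b)
      have b1: "b + R \<le> K" "Suc b + (R-1) \<le> K" using Suc.prems by arith+
      have p1: "odd ((a+1) + int b)" "even ((a+1) + int (Suc b))" using Suc.prems by presburger+
      have ih: "[:0,1:]^(R div 2) * polystar (Phi \<alpha> b) = SS \<alpha> K (a+1) b R"
        using Suc.IH[OF b1(1)] p1 od by simp
      have ih2: "[:0,1:]^(R div 2) * Phi \<alpha> (Suc b) = SS \<alpha> K (a+1) (Suc b) (R-1)"
        using less.IH[OF lt b1(2)] p1 e od by simp
      have "SS \<alpha> K a (Suc b) R = smult (1 - complex_of_real ((cmod (\<alpha> b))\<^sup>2)) (SS \<alpha> K (a+1) b R)
          + smult (- \<alpha> b) (SS \<alpha> K (a+1) (Suc b) (R-1))"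
        using SS_odd[of a "Suc b" R \<alpha> K] Suc.prems R1 by simp
      also have "\<dots> = [:0,1:]^(R div 2) * polystar (Phi \<alpha> (Suc b))"
        unfolding ih[symmetric] ih2[symmetric] polystar_Phi_rec[of \<alpha> b]
        by (simp only: mult_smult_right smult_diff_right smult_minus_left diff_conv_add_uminus
             distrib_left mult_minus_right)
      finally show ?case by simp
    qed
  qed
qed




lemma sum_le_ext:
  fixes n N :: nat
  assumes "n \<le> N" "\<And>i. n < i \<Longrightarrow> i \<le> N \<Longrightarrow> F i = 0"
  shows "(\<Sum>i\<le>n. F i) = (\<Sum>i\<le>N. F i)"
proof (rule sum.mono_neutral_left)
  show "\<forall>i\<in>{..N} - {..n}. F i = 0"
  proof (intro ballI)
    fix i assume "i \<in> {..N} - {..n}"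
    then show "F i = 0" by (intro assms(2)) (auto simp: not_le)
  qed
qed (use assms(1) in auto)

lemma lprod_eq:
  assumes "degree f \<le> N" "degree g \<le> M"
  shows "lprod f g k = (\<Sum>i\<le>N. \<Sum>j\<le>M. if int i - int j = k then coeff f i * cnj (coeff g j) else 0)"
proof -
  have "lprod f g k = (\<Sum>i\<le>N. \<Sum>j\<le>degree g. if int i - int j = k then coeff f i * cnj (coeff g j) else 0)"
    unfolding lprod_def by (rule sum_le_ext[OF assms(1)]) (simp add: coeff_eq_0 cong: if_cong)
  also have "\<dots> = (\<Sum>i\<le>N. \<Sum>j\<le>M. if int i - int j = k then coeff f i * cnj (coeff g j) else 0)"
    by (rule sum.cong[OF refl], rule sum_le_ext[OF assms(2)]) (simp add: coeff_eq_0 cong: if_cong)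
  finally show ?thesis .
qed

lemma ip_eq:
  assumes "degree f \<le> N" "degree g \<le> M"
  shows "ip c f g = (\<Sum>i\<le>N. \<Sum>j\<le>M. coeff f i * cnj (coeff g j) * c (int i - int j))"
proof -
  define S where "S = {- int M..int N}"
  define X where "X i j = coeff f i * cnj (coeff g j)" for i j
  have fin: "finite S" unfolding S_def by simp
  have sub: "{k. lprod f g k \<noteq> 0} \<subseteq> S"
  proof
    fix k assume "k \<in> {k. lprod f g k \<noteq> 0}"
    then have "lprod f g k \<noteq> 0" by simp
    then obtain i where i: "i \<in> {..N}"
      "(\<Sum>j\<le>M. if int i - int j = k then coeff f i * cnj (coeff g j) else 0) \<noteq> 0"
      unfolding lprod_eq[OF assms] by (rule sum.not_neutral_contains_not_neutral)
    from i(2) obtain j where j: "j \<in> {..M}" "(if int i - int j = k then coeff f i * cnj (coeff g j) else 0) \<noteq> 0"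
      by (rule sum.not_neutral_contains_not_neutral)
    from j(2) have "int i - int j = k" by (cases "int i - int j = k") simp_all
    then show "k \<in> S" unfolding S_def using i(1) j(1) by auto
  qed
  have "ip c f g = (\<Sum>k\<in>S. lprod f g k * c k)"
    unfolding ip_def Lfun_def by (rule sum.mono_neutral_left[OF fin sub]) auto
  also have "\<dots> = (\<Sum>k\<in>S. \<Sum>i\<le>N. \<Sum>j\<le>M. (if int i - int j = k then X i j else 0) * c k)"
    unfolding lprod_eq[OF assms] X_def sum_distrib_right ..
  also have "\<dots> = (\<Sum>i\<le>N. \<Sum>k\<in>S. \<Sum>j\<le>M. (if int i - int j = k then X i j else 0) * c k)"
    by (rule sum.swap)
  also have "\<dots> = (\<Sum>i\<le>N. \<Sum>j\<le>M. \<Sum>k\<in>S. (if int i - int j = k then X i j else 0) * c k)"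
    by (rule sum.cong[OF refl], rule sum.swap)
  also have "\<dots> = (\<Sum>i\<le>N. \<Sum>j\<le>M. X i j * c (int i - int j))"
  proof (rule sum.cong[OF refl], rule sum.cong[OF refl])
    fix i j assume "i \<in> {..N}" "j \<in> {..M}"
    then have "int i - int j \<in> S" unfolding S_def by auto
    have "(\<Sum>k\<in>S. (if int i - int j = k then X i j else 0) * c k)
       = (\<Sum>k\<in>S. if int i - int j = k then X i j * c k else 0)"
      by (rule sum.cong) auto
    also have "\<dots> = X i j * c (int i - int j)"
      using fin \<open>int i - int j \<in> S\<close> by (simp add: sum.delta')
    finally show "(\<Sum>k\<in>S. (if int i - int j = k then X i j else 0) * c k) = X i j * c (int i - int j)" .
  qed
  finally show ?thesis unfolding X_def .
qed

lemma ip_add_left: "ip c (f + g) h = ip c f h + ip c g h"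
proof -
  let ?N = "degree f + degree g" and ?M = "degree h"
  have d: "degree (f + g) \<le> ?N" "degree f \<le> ?N" "degree g \<le> ?N" "degree h \<le> ?M"
    using degree_add_le_max[of f g] by linarith+
  show ?thesis
    unfolding ip_eq[OF d(1) d(4)] ip_eq[OF d(2) d(4)] ip_eq[OF d(3) d(4)] sum.distrib[symmetric]
    by (intro sum.cong refl) (auto simp: ring_distribs)
qed

lemma ip_smult_left: "ip c (smult a f) h = a * ip c f h"
proof -
  have d: "degree (smult a f) \<le> degree f" "degree f \<le> degree f" "degree h \<le> degree h" by simp_all
  show ?thesis unfolding ip_eq[OF d(1) d(3)] ip_eq[OF d(2) d(3)] sum_distrib_left
    by (intro sum.cong refl) simp
qed

lemma ip_add_right: "ip c h (f + g) = ip c h f + ip c h g"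
proof -
  let ?N = "degree f + degree g" and ?M = "degree h"
  have d: "degree (f + g) \<le> ?N" "degree f \<le> ?N" "degree g \<le> ?N" "degree h \<le> ?M"
    using degree_add_le_max[of f g] by linarith+
  show ?thesis
    unfolding ip_eq[OF d(4) d(1)] ip_eq[OF d(4) d(2)] ip_eq[OF d(4) d(3)] sum.distrib[symmetric]
    by (intro sum.cong refl) (auto simp: ring_distribs)
qed

lemma ip_smult_right: "ip c h (smult a f) = cnj a * ip c h f"
proof -
  have d: "degree (smult a f) \<le> degree f" "degree f \<le> degree f" "degree h \<le> degree h" by simp_all
  show ?thesis unfolding ip_eq[OF d(3) d(1)] ip_eq[OF d(3) d(2)] sum_distrib_left
    by (intro sum.cong refl) simp
qed

lemma ip_minus_left: "ip c (- f) h = - ip c f h"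
  using ip_smult_left[of c "-1" f h] by simp

lemma ip_minus_right: "ip c h (- f) = - ip c h f"
  using ip_smult_right[of c h "-1" f] by simp

lemma ip_diff_left: "ip c (f - g) h = ip c f h - ip c g h"
  using ip_add_left[of c f "-g" h] by (simp add: ip_minus_left)

lemma ip_diff_right: "ip c h (f - g) = ip c h f - ip c h g"
  using ip_add_right[of c h f "-g"] by (simp add: ip_minus_right)

lemma ip_zero_right: "ip c h 0 = 0"
  using ip_smult_right[of c h 0 0] by simp

lemma ip_zero_left: "ip c 0 h = 0"
  using ip_smult_left[of c 0 0 h] by simp

lemma ip_sum_right: "ip c h (sum f A) = (\<Sum>x\<in>A. ip c h (f x))"
  by (induction A rule: infinite_finite_induct) (auto simp: ip_zero_right ip_add_right)

lemma ip_one: "ip c 1 1 = c 0"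
  by (simp add: ip_eq[of 1 0 1 0])

lemma degree_xmult_le: "degree ([:0,1:] * (p::complex poly)) \<le> degree p + 1"
  by (rule degree_le) (auto simp: coeff_xmult coeff_eq_0)

lemma ip_shift: "ip c ([:0,1:] * f) ([:0,1:] * g) = ip c f g"
proof -
  have "ip c ([:0,1:] * f) ([:0,1:] * g) =
     (\<Sum>i\<le>Suc (degree f). \<Sum>j\<le>Suc (degree g). coeff ([:0,1:] * f) i * cnj (coeff ([:0,1:] * g) j) * c (int i - int j))"
    by (rule ip_eq) (use degree_xmult_le in auto)
  also have "\<dots> = (\<Sum>i\<le>degree f. \<Sum>j\<le>degree g. coeff f i * cnj (coeff g j) * c (int i - int j))"
    by (simp only: sum.atMost_Suc_shift) (simp add: coeff_xmult)
  also have "\<dots> = ip c f g" by (rule ip_eq[symmetric]) auto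
  finally show ?thesis .
qed

lemma sum_flip: "(\<Sum>i\<le>(n::nat). F i) = (\<Sum>i\<le>n. F (n - i))"
  by (rule sum.reindex_bij_witness[of _ "\<lambda>i. n - i" "\<lambda>i. n - i"]) auto

lemma ip_polystar:
  assumes "degree f = n" "degree g = n"
  shows "ip c (polystar f) (polystar g) = ip c g f"
proof -
  have "ip c (polystar f) (polystar g) =
     (\<Sum>i\<le>n. \<Sum>j\<le>n. coeff (polystar f) i * cnj (coeff (polystar g) j) * c (int i - int j))"
    by (rule ip_eq) (use degree_polystar assms in metis)+
  also have "\<dots> = (\<Sum>i\<le>n. \<Sum>j\<le>n. cnj (coeff f (n - i)) * coeff g (n - j) * c (int i - int j))"
    by (intro sum.cong refl) (simp add: coeff_polystar assms)
  also have "\<dots> = (\<Sum>i\<le>n. \<Sum>j\<le>n. cnj (coeff f i) * coeff g j * c (int j - int i))"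
  proof -
    have "(\<Sum>i\<le>n. \<Sum>j\<le>n. cnj (coeff f (n - i)) * coeff g (n - j) * c (int i - int j))
       = (\<Sum>i\<le>n. \<Sum>j\<le>n. cnj (coeff f (n - (n - i))) * coeff g (n - (n - j)) * c (int (n - i) - int (n - j)))"
      by (subst sum_flip) (subst (2) sum_flip, rule refl)
    also have "\<dots> = (\<Sum>i\<le>n. \<Sum>j\<le>n. cnj (coeff f i) * coeff g j * c (int j - int i))"
      by (intro sum.cong refl) (simp add: of_nat_diff)
    finally show ?thesis .
  qed
  also have "\<dots> = (\<Sum>j\<le>n. \<Sum>i\<le>n. coeff g j * cnj (coeff f i) * c (int j - int i))"
    by (subst sum.swap) (simp add: mult.commute)
  also have "\<dots> = ip c g f" by (rule ip_eq[symmetric]) (use assms in auto)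
  finally show ?thesis .
qed




lemma const_poly: "degree (g::complex poly) = 0 \<Longrightarrow> g = smult (coeff g 0) 1"
  by (rule poly_eqI) (auto simp: coeff_eq_0 coeff_pCons split: nat.split)

lemma orth_right:
  assumes orth: "\<forall>m k. m \<noteq> k \<longrightarrow> ip c (Phi \<alpha> m) (Phi \<alpha> k) = 0"
  shows "degree g < m \<Longrightarrow> ip c (Phi \<alpha> m) g = 0"
proof -
  have "\<forall>g. degree g \<le> d \<longrightarrow> d < m \<longrightarrow> ip c (Phi \<alpha> m) g = 0" for d
  proof (induction d)
    case 0
    show ?case
    proof (intro allI impI)
      fix g :: "complex poly" assume "degree g \<le> 0" "0 < m"
      then have "g = smult (coeff g 0) (Phi \<alpha> 0)" using const_poly by simp
      then have "ip c (Phi \<alpha> m) g = cnj (coeff g 0) * ip c (Phi \<alpha> m) (Phi \<alpha> 0)"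
        by (metis ip_smult_right)
      then show "ip c (Phi \<alpha> m) g = 0" using orth[rule_format, of m 0] \<open>0 < m\<close> by simp
    qed
  next
    case (Suc d)
    show ?case
    proof (intro allI impI)
      fix g :: "complex poly" assume g: "degree g \<le> Suc d" "Suc d < m"
      define h where "h = g - smult (coeff g (Suc d)) (Phi \<alpha> (Suc d))"
      have "degree h \<le> d"
      proof (rule degree_le, intro allI impI)
        fix i assume "d < i"
        then consider "i = Suc d" | "i > Suc d" by linarith
        then show "coeff h i = 0"
        proof cases
          case 1 then show ?thesis unfolding h_def by (simp del: Phi.simps)
        next
          case 2 then show ?thesis unfolding h_def using g
            by (simp add: coeff_eq_0 del: Phi.simps)
        qed
      qed
      then have h0: "ip c (Phi \<alpha> m) h = 0" using Suc.IH g by simp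
      have "g = h + smult (coeff g (Suc d)) (Phi \<alpha> (Suc d))" unfolding h_def by simp
      then have "ip c (Phi \<alpha> m) g = ip c (Phi \<alpha> m) h + cnj (coeff g (Suc d)) * ip c (Phi \<alpha> m) (Phi \<alpha> (Suc d))"
        by (metis ip_add_right ip_smult_right)
      then show "ip c (Phi \<alpha> m) g = 0" using h0 orth[rule_format, of m "Suc d"] g by (simp del: Phi.simps)
    qed
  qed
  then show "degree g < m \<Longrightarrow> ip c (Phi \<alpha> m) g = 0" by blast
qed

lemma orth_left:
  assumes orth: "\<forall>m k. m \<noteq> k \<longrightarrow> ip c (Phi \<alpha> m) (Phi \<alpha> k) = 0"
  shows "degree g < m \<Longrightarrow> ip c g (Phi \<alpha> m) = 0"
proof -
  have "\<forall>g. degree g \<le> d \<longrightarrow> d < m \<longrightarrow> ip c g (Phi \<alpha> m) = 0" for d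
  proof (induction d)
    case 0
    show ?case
    proof (intro allI impI)
      fix g :: "complex poly" assume "degree g \<le> 0" "0 < m"
      then have "g = smult (coeff g 0) (Phi \<alpha> 0)" using const_poly by simp
      then have "ip c g (Phi \<alpha> m) = coeff g 0 * ip c (Phi \<alpha> 0) (Phi \<alpha> m)"
        by (metis ip_smult_left)
      then show "ip c g (Phi \<alpha> m) = 0" using orth[rule_format, of 0 m] \<open>0 < m\<close> by simp
    qed
  next
    case (Suc d)
    show ?case
    proof (intro allI impI)
      fix g :: "complex poly" assume g: "degree g \<le> Suc d" "Suc d < m"
      define h where "h = g - smult (coeff g (Suc d)) (Phi \<alpha> (Suc d))"
      have "degree h \<le> d"
      proof (rule degree_le, intro allI impI)
        fix i assume "d < i"
        then consider "i = Suc d" | "i > Suc d" by linarith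
        then show "coeff h i = 0"
        proof cases
          case 1 then show ?thesis unfolding h_def by (simp del: Phi.simps)
        next
          case 2 then show ?thesis unfolding h_def using g
            by (simp add: coeff_eq_0 del: Phi.simps)
        qed
      qed
      then have h0: "ip c h (Phi \<alpha> m) = 0" using Suc.IH g by simp
      have "g = h + smult (coeff g (Suc d)) (Phi \<alpha> (Suc d))" unfolding h_def by simp
      then have "ip c g (Phi \<alpha> m) = ip c h (Phi \<alpha> m) + coeff g (Suc d) * ip c (Phi \<alpha> (Suc d)) (Phi \<alpha> m)"
        by (metis ip_add_left ip_smult_left)
      then show "ip c g (Phi \<alpha> m) = 0" using h0 orth[rule_format, of "Suc d" m] g by (simp del: Phi.simps)
    qed
  qed
  then show "degree g < m \<Longrightarrow> ip c g (Phi \<alpha> m) = 0" by blast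
qed

lemma norm_Phi:
  assumes orth: "\<forall>m k. m \<noteq> k \<longrightarrow> ip c (Phi \<alpha> m) (Phi \<alpha> k) = 0"
    and c0: "c 0 = 1"
  shows "ip c (Phi \<alpha> n) (Phi \<alpha> n) = (\<Prod>k<n. 1 - complex_of_real ((cmod (\<alpha> k))\<^sup>2))"
proof (induction n)
  case 0
  then show ?case using ip_one[of c] c0 by simp
next
  case (Suc n)
  define P where "P = Phi \<alpha> n"
  define Ps where "Ps = polystar P"
  define a where "a = \<alpha> n"
  define Q where "Q = Phi \<alpha> (Suc n)"
  have Qd: "Q = [:0,1:] * P - smult (cnj a) Ps" unfolding Q_def P_def Ps_def a_def by simp
  have dPs: "degree Ps < Suc n" unfolding Ps_def P_def using degree_polystar[of "Phi \<alpha> n"] by simp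
  have z1: "ip c Q Ps = 0" unfolding Q_def by (rule orth_right[OF orth dPs])
  have z2: "ip c Ps Q = 0" unfolding Q_def by (rule orth_left[OF orth dPs])
  have pp: "ip c Ps Ps = ip c P P" unfolding Ps_def P_def by (rule ip_polystar) simp_all
  have zP: "[:0,1:] * P = Q + smult (cnj a) Ps" using Qd by simp
  have "ip c Q Q = ip c Q ([:0,1:] * P) - a * ip c Q Ps"
    by (subst (2) Qd) (simp add: ip_diff_right ip_smult_right)
  also have "\<dots> = ip c Q ([:0,1:] * P)" using z1 by simp
  also have "\<dots> = ip c ([:0,1:] * P) ([:0,1:] * P) - cnj a * ip c Ps ([:0,1:] * P)"
    by (subst (1) Qd) (simp add: ip_diff_left ip_smult_left)
  also have "ip c Ps ([:0,1:] * P) = a * ip c P P"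
    by (subst zP) (simp add: ip_add_right ip_smult_right z2 pp)
  also have "ip c ([:0,1:] * P) ([:0,1:] * P) = ip c P P" by (rule ip_shift)
  finally have "ip c Q Q = (1 - cnj a * a) * ip c P P" by (simp add: algebra_simps)
  then have "ip c Q Q = (1 - complex_of_real ((cmod a)\<^sup>2)) * ip c P P" by (simp only: cnj_mult_self)
  then show ?case using Suc.IH unfolding Q_def P_def a_def
    by (simp only: prod.lessThan_Suc ac_simps)
qed




theorem theorem3p7:
  fixes \<alpha> :: "nat \<Rightarrow> complex" and c :: "int \<Rightarrow> complex" and n r s :: nat
  assumes "\<forall>k. cmod (\<alpha> k) < 1"
    and "c 0 = 1"
    and "\<forall>m k. m \<noteq> k \<longrightarrow> ip c (Phi \<alpha> m) (Phi \<alpha> k) = 0"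
  shows "mu c \<alpha> n r s =
    (\<Sum>p\<in>gMot (- int r) (int r) (2 * int n - int s) (int s). wtM \<alpha> (- int r) (int r) p)"
proof -
  note orth = assms(3)
  define K where "K = r + 2 * n + s"
  have ex: "[:0,1:]^((2*n) div 2) * Phi \<alpha> r = SS \<alpha> K (- int r) r (2*n)"
    using expand[of r "2*n" K "- int r" \<alpha>] unfolding K_def by simp
  have m: "monom 1 n * Phi \<alpha> r = SS \<alpha> K (- int r) r (2*n)"
    using ex by (simp add: monom_altdef)
  define N where "N = ip c (Phi \<alpha> s) (Phi \<alpha> s)"
  have Nnz: "N \<noteq> 0"
  proof -
    have "N = (\<Prod>k<s. 1 - complex_of_real ((cmod (\<alpha> k))\<^sup>2))"
      unfolding N_def by (rule norm_Phi[OF orth assms(2)])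
    moreover have "1 - complex_of_real ((cmod (\<alpha> k))\<^sup>2) \<noteq> 0" for k
    proof -
      have "(cmod (\<alpha> k))\<^sup>2 < 1" using assms(1) norm_ge_zero[of "\<alpha> k"]
        by (metis abs_norm_cancel abs_square_less_1)
      then have "1 - (cmod (\<alpha> k))\<^sup>2 \<noteq> 0" by simp
      moreover have eq: "1 - complex_of_real ((cmod (\<alpha> k))\<^sup>2) = complex_of_real (1 - (cmod (\<alpha> k))\<^sup>2)"
        by (simp only: of_real_diff of_real_1)
      ultimately show ?thesis unfolding eq of_real_eq_0_iff by blast
    qed
    ultimately show ?thesis by simp
  qed
  have "ip c (Phi \<alpha> s) (monom 1 n * Phi \<alpha> r)
     = (\<Sum>t\<le>K. Q \<alpha> (- int r) r (2*n) t * ip c (Phi \<alpha> s) (Phi \<alpha> t))"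
    unfolding m SS_def ip_sum_right ip_smult_right by simp
  also have "\<dots> = (\<Sum>t\<le>K. if s = t then Q \<alpha> (- int r) r (2*n) t * N else 0)"
    by (rule sum.cong) (auto simp: N_def orth)
  also have "\<dots> = Q \<alpha> (- int r) r (2*n) s * N"
    by (simp add: sum.delta' K_def)
  finally have ipv: "ip c (Phi \<alpha> s) (monom 1 n * Phi \<alpha> r) = Q \<alpha> (- int r) r (2*n) s * N" .
  have muv: "mu c \<alpha> n r s = Q \<alpha> (- int r) r (2*n) s"
    unfolding mu_def ipv N_def[symmetric] using Nnz by simp
  show ?thesis
  proof (cases "s \<le> r + 2*n")
    case True
    have e: "- int r + int (r + 2*n - s) = 2 * int n - int s" using True by simp
    have "Q \<alpha> (- int r) r (2*n) s = PS \<alpha> (- int r) (int r) (r + 2*n - s) (int s)"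
      unfolding Q_def using True by simp
    also have "\<dots> = (\<Sum>p\<in>gMot (- int r) (int r) (- int r + int (r + 2*n - s)) (int s). wtM \<alpha> (- int r) (int r) p)"
      by (rule PS_gMot[symmetric]) simp
    finally show ?thesis unfolding muv e .
  next
    case False
    have "gMot (- int r) (int r) (2 * int n - int s) (int s) = {}"
      unfolding gMot_def using False by auto
    then show ?thesis unfolding muv Q_def using False by simp
  qed
qed


end
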